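(* For every ProbNetKAT program $p$, every $n\in\mathbb{N}$ and all $a,b\subseteq\mathsf{Pk}$, \[ \mathcal{B}[\![p^{(n)}]\!]_{a,b} = \sum_{a'\subseteq\mathsf{Pk}} \big(\mathcal{S}[\![p]\!]^{n+1}\big)_{(a,\emptyset),(a',b)}. \]
   Context: $\mathsf{Pk}$ is a finite set of packets (records of finitely many fields with finitely many values). ProbNetKAT programs are built from predicates $\mathsf{false},\mathsf{true}, f=n$, their negations/disjunctions/conjunctions, assignments $f\leftarrow n$, union $p\,\&\,q$, sequencing $p;q$, probabilistic choice $p\oplus_r q$ and iteration $p^*$. $p^{(0)}=\mathsf{true}$, $p^{(n+1)}=\mathsf{true}\,\&\,(p;p^{(n)})$. The matrix semantics $\mathcal{B}[\![p]\!]\in[0,1]^{2^{\mathsf{Pk}}\times 2^{\mathsf{Pk}}}$ ($[\varphi]$ = Iverson bracket): $\mathcal{B}[\![\mathsf{false}]\!]_{ab}=[b=\emptyset]$; $\mathcal{B}[\![\mathsf{true}]\!]_{ab}=[a=b]$; $\mathcal{B}[\![f=n]\!]_{ab}=[b=\{\pi\in a:\pi.f=n\}]$; $\mathcal{B}[\![\neg t]\!]_{ab}=[b\subseteq a]\mathcal{B}[\![t]\!]_{a,a-b}$; $\mathcal{B}[\![f\leftarrow n]\!]_{ab}=[b=\{\pi[f:=n]:\pi\in a\}]$; $\mathcal{B}[\![p\,\&\,q]\!]_{ab}=\sum_{c,d}[c\cup d=b]\mathcal{B}[\![p]\!]_{ac}\mathcal{B}[\![q]\!]_{ad}$; $\mathcal{B}[\![p;q]\!]=\mathcal{B}[\![p]\!]\mathcal{B}[\![q]\!]$;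 $\mathcal{B}[\![p\oplus_r q]\!]=r\mathcal{B}[\![p]\!]+(1-r)\mathcal{B}[\![q]\!]$; $\mathcal{B}[\![p^*]\!]_{ab}=\lim_n\mathcal{B}[\![p^{(n)}]\!]_{ab}$. The small-step matrix on $2^{\mathsf{Pk}}\times2^{\mathsf{Pk}}$ is $\mathcal{S}[\![p]\!]_{(a,b),(a',b')}=[b'=b\cup a]\,\mathcal{B}[\![p]\!]_{a,a'}$; $\mathcal{S}[\![p]\!]^{m}$ is its $m$-th matrix power. *)

theory Defs
  imports Complex_Main
begin

text \<open>Packets: records with fields of finite type 'f and values of finite type 'v.
  The packet set Pk is UNIV :: ('f \<Rightarrow> 'v) set, which is finite.\<close>

type_synonym ('f, 'v) packet = "'f \<Rightarrow> 'v"

datatype ('f, 'v) pred =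
    PFalse
  | PTrue
  | Test 'f 'v
  | Neg "('f, 'v) pred"
  | Disj "('f, 'v) pred" "('f, 'v) pred"
  | Conj "('f, 'v) pred" "('f, 'v) pred"

datatype ('f, 'v) prog =
    Pred "('f, 'v) pred"
  | Assign 'f 'v
  | Union "('f, 'v) prog" "('f, 'v) prog"
  | Seq "('f, 'v) prog" "('f, 'v) prog"
  | Choice "('f, 'v) prog" real "('f, 'v) prog"
  | Star "('f, 'v) prog"

fun wf_prog :: "('f, 'v) prog \<Rightarrow> bool" where
  "wf_prog (Pred t) = True"
| "wf_prog (Assign f n) = True"
| "wf_prog (Union p q) = (wf_prog p \<and> wf_prog q)"
| "wf_prog (Seq p q) = (wf_prog p \<and> wf_prog q)"
| "wf_prog (Choice p r q) = (0 \<le> r \<and> r \<le> 1 \<and> wf_prog p \<and> wf_prog q)"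
| "wf_prog (Star p) = wf_prog p"

fun prog_pow :: "('f, 'v) prog \<Rightarrow> nat \<Rightarrow> ('f, 'v) prog" where
  "prog_pow p 0 = Pred PTrue"
| "prog_pow p (Suc n) = Union (Pred PTrue) (Seq p (prog_pow p n))"

type_synonym 'i mat = "'i \<Rightarrow> 'i \<Rightarrow> real"

definition iv :: "bool \<Rightarrow> real" where
  "iv P = (if P then 1 else 0)"

definition mat_id :: "'i mat" where
  "mat_id x y = iv (x = y)"

definition mat_mult :: "('i::finite) mat \<Rightarrow> 'i mat \<Rightarrow> 'i mat" where
  "mat_mult A B x z = (\<Sum>y\<in>UNIV. A x y * B y z)"

fun mat_pow :: "('i::finite) mat \<Rightarrow> nat \<Rightarrow> 'i mat" where
  "mat_pow A 0 = mat_id"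
| "mat_pow A (Suc n) = mat_mult (mat_pow A n) A"

definition mat_union :: "('p::finite) set mat \<Rightarrow> 'p set mat \<Rightarrow> 'p set mat" where
  "mat_union P Q a b = (\<Sum>c\<in>UNIV. \<Sum>d\<in>UNIV. iv (c \<union> d = b) * P a c * Q a d)"

fun mat_iter :: "('p::finite) set mat \<Rightarrow> nat \<Rightarrow> 'p set mat" where
  "mat_iter M 0 = mat_id"
| "mat_iter M (Suc n) = mat_union mat_id (mat_mult M (mat_iter M n))"

fun predB :: "('f::finite, 'v::finite) pred \<Rightarrow> ('f, 'v) packet set mat" where
  "predB PFalse a b = iv (b = {})"
| "predB PTrue a b = iv (a = b)"
| "predB (Test f n) a b = iv (b = {\<pi> \<in> a. \<pi> f = n})"
| "predB (Neg t) a b = iv (b \<subseteq> a) * predB t a (a - b)"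
| "predB (Disj t u) a b = mat_union (predB t) (predB u) a b"
| "predB (Conj t u) a b = mat_mult (predB t) (predB u) a b"

fun progB :: "('f::finite, 'v::finite) prog \<Rightarrow> ('f, 'v) packet set mat" where
  "progB (Pred t) = predB t"
| "progB (Assign f n) = (\<lambda>a b. iv (b = (\<lambda>\<pi>. \<pi>(f := n)) ` a))"
| "progB (Union p q) = mat_union (progB p) (progB q)"
| "progB (Seq p q) = mat_mult (progB p) (progB q)"
| "progB (Choice p r q) = (\<lambda>a b. r * progB p a b + (1 - r) * progB q a b)"
| "progB (Star p) = (\<lambda>a b. lim (\<lambda>n. mat_iter (progB p) n a b))"

definition smallS :: "('f::finite, 'v::finite) prog \<Rightarrow> (('f, 'v) packet set \<times> ('f, 'v) packet set) mat" where
  "smallS p x y = (case x of (a, b) \<Rightarrow> case y of (a', b') \<Rightarrow> iv (b' = b \<union> a) * progB p a a')"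

end

theory Submission
  imports Defs
begin

lemma sum_iv_r: "(\<Sum>c\<in>(UNIV::'a::finite set). f c * iv (c = x)) = f x"
proof -
  have "(\<Sum>c\<in>(UNIV::'a::finite set). f c * iv (c = x)) = (\<Sum>c\<in>UNIV. if c = x then f c else 0)"
    by (rule sum.cong) (auto simp: iv_def)
  then show ?thesis by simp
qed
lemma sum_iv_l: "(\<Sum>c\<in>(UNIV::'a::finite set). iv (c = x) * f c) = f x"
  using sum_iv_r[of f x] by (simp add: mult.commute)
lemma sum_iv_r': "(\<Sum>c\<in>(UNIV::'a::finite set). f c * iv (x = c)) = f x"
  using sum_iv_r[of f x] by (simp add: eq_commute)
lemma sum_iv_l': "(\<Sum>c\<in>(UNIV::'a::finite set). iv (x = c) * f c) = f x"
  using sum_iv_l[of x f] by (simp add: eq_commute)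

lemma mat_mult_assoc: "mat_mult (mat_mult A B) C = mat_mult A (mat_mult B C)"
  by (auto simp: mat_mult_def fun_eq_iff sum_distrib_left sum_distrib_right mult.assoc intro: sum.swap)

lemma mat_mult_id_left: "mat_mult mat_id A = A"
  by (simp add: mat_mult_def mat_id_def fun_eq_iff sum_iv_l')
lemma mat_mult_id_right: "mat_mult A mat_id = A"
  by (simp add: mat_mult_def mat_id_def fun_eq_iff sum_iv_r)

lemma mat_pow_Suc': "mat_pow A (Suc n) = mat_mult A (mat_pow A n)"
  by (induction n) (simp_all add: mat_mult_id_left mat_mult_id_right mat_mult_assoc)

definition stoch :: "('i::finite) mat \<Rightarrow> bool" where
  "stoch M \<longleftrightarrow> (\<forall>a b. 0 \<le> M a b) \<and> (\<forall>a. (\<Sum>b\<in>UNIV. M a b) = 1)"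

lemma stoch_id: "stoch mat_id"
  by (simp add: stoch_def mat_id_def iv_def)

lemma stoch_mult: assumes "stoch A" "stoch B" shows "stoch (mat_mult A B)"
proof -
  have "(\<Sum>z\<in>UNIV. mat_mult A B x z) = 1" for x
  proof -
    have "(\<Sum>z\<in>UNIV. mat_mult A B x z) = (\<Sum>y\<in>UNIV. A x y * (\<Sum>z\<in>UNIV. B y z))"
      unfolding mat_mult_def sum_distrib_left by (rule sum.swap)
    also have "\<dots> = 1" using assms by (simp add: stoch_def)
    finally show ?thesis .
  qed
  moreover have "0 \<le> mat_mult A B x z" for x z
    using assms unfolding mat_mult_def stoch_def by (auto intro!: sum_nonneg)
  ultimately show ?thesis by (simp add: stoch_def)
qed

lemma stoch_union: assumes "stoch A" "stoch B" shows "stoch (mat_union A B)"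
proof -
  have "(\<Sum>b\<in>UNIV. mat_union A B a b) = 1" for a
  proof -
    have "(\<Sum>b\<in>UNIV. mat_union A B a b) = (\<Sum>c\<in>UNIV. \<Sum>d\<in>UNIV. \<Sum>b\<in>UNIV. iv (c \<union> d = b) * A a c * B a d)"
      unfolding mat_union_def
      by (subst sum.swap, rule sum.cong[OF refl], subst sum.swap, simp)
    also have "\<dots> = (\<Sum>c\<in>UNIV. \<Sum>d\<in>UNIV. A a c * B a d)"
      by (simp add: mult.assoc sum_iv_l')
    also have "\<dots> = (\<Sum>c\<in>UNIV. A a c) * (\<Sum>d\<in>UNIV. B a d)" by (simp add: sum_product)
    also have "\<dots> = 1" using assms by (simp add: stoch_def)
    finally show ?thesis .
  qed
  moreover have "0 \<le> mat_union A B x z" for x z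
    using assms unfolding mat_union_def stoch_def by (auto intro!: sum_nonneg simp: iv_def)
  ultimately show ?thesis by (simp add: stoch_def)
qed

fun psem :: "('f, 'v) pred \<Rightarrow> ('f, 'v) packet set" where
  "psem PFalse = {}"
| "psem PTrue = UNIV"
| "psem (Test f n) = {\<pi>. \<pi> f = n}"
| "psem (Neg t) = - psem t"
| "psem (Disj t u) = psem t \<union> psem u"
| "psem (Conj t u) = psem t \<inter> psem u"

lemma predB_sem: "predB t a b = iv (b = a \<inter> psem t)"
proof (induction t arbitrary: a b)
  case (Neg t)
  then show ?case by (auto simp: iv_def)
next
  case (Disj t u)
  have "mat_union (predB t) (predB u) a b = (\<Sum>c\<in>UNIV. \<Sum>d\<in>UNIV. (iv (c \<union> d = b) * iv (c = a \<inter> psem t)) * iv (d = a \<inter> psem u))"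
    by (simp add: mat_union_def Disj.IH)
  also have "\<dots> = iv (a \<inter> psem t \<union> a \<inter> psem u = b)" by (simp add: sum_iv_r)
  finally show ?case by (auto simp: iv_def)
next
  case (Conj t u)
  have "mat_mult (predB t) (predB u) a b = (\<Sum>y\<in>UNIV. iv (b = y \<inter> psem u) * iv (y = a \<inter> psem t))"
    by (simp add: mat_mult_def Conj.IH mult.commute)
  also have "\<dots> = iv (b = a \<inter> psem t \<inter> psem u)" by (simp add: sum_iv_r)
  finally show ?case by (simp add: Int_assoc)
qed (auto simp: iv_def)

lemma stoch_predB: "stoch (predB t)"
  by (simp add: stoch_def predB_sem iv_def)


lemma stoch_iter: "stoch M \<Longrightarrow> stoch (mat_iter M n)"
  by (induction n) (simp_all add: stoch_id stoch_union stoch_mult)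

definition gsum :: "('p::finite) set mat \<Rightarrow> nat \<Rightarrow> 'p set mat" where
  "gsum M n a b = (\<Sum>c\<in>UNIV. iv (c \<subseteq> b) * mat_iter M n a c)"

lemma iter_Suc_expand:
  "mat_iter M (Suc n) a c = (\<Sum>d\<in>UNIV. iv (a \<union> d = c) * mat_mult M (mat_iter M n) a d)"
proof -
  have "mat_iter M (Suc n) a c = (\<Sum>c'\<in>UNIV. \<Sum>d\<in>UNIV. (iv (c' \<union> d = c) * mat_mult M (mat_iter M n) a d) * iv (a = c'))"
    by (simp add: mat_union_def mat_id_def mult_ac)
  also have "\<dots> = (\<Sum>d\<in>UNIV. \<Sum>c'\<in>UNIV. (iv (c' \<union> d = c) * mat_mult M (mat_iter M n) a d) * iv (a = c'))"
    by (rule sum.swap)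
  also have "\<dots> = (\<Sum>d\<in>UNIV. iv (a \<union> d = c) * mat_mult M (mat_iter M n) a d)"
    by (simp add: sum_iv_r')
  finally show ?thesis .
qed

lemma gsum_0: "gsum M 0 a b = iv (a \<subseteq> b)"
  by (simp add: gsum_def mat_id_def sum_iv_r')

lemma gsum_Suc: "gsum M (Suc n) a b = iv (a \<subseteq> b) * (\<Sum>y\<in>UNIV. M a y * gsum M n y b)"
proof -
  let ?F = "mat_iter M n"
  have "gsum M (Suc n) a b = (\<Sum>c\<in>UNIV. \<Sum>d\<in>UNIV. iv (c \<subseteq> b) * iv (a \<union> d = c) * mat_mult M ?F a d)"
    unfolding gsum_def iter_Suc_expand by (simp add: sum_distrib_left mult_ac)
  also have "\<dots> = (\<Sum>d\<in>UNIV. \<Sum>c\<in>UNIV. (iv (c \<subseteq> b) * mat_mult M ?F a d) * iv (a \<union> d = c))"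
    by (subst sum.swap) (simp add: mult_ac)
  also have "\<dots> = (\<Sum>d\<in>UNIV. iv (a \<union> d \<subseteq> b) * mat_mult M ?F a d)"
    by (simp add: sum_iv_r')
  also have "\<dots> = (\<Sum>d\<in>UNIV. iv (a \<subseteq> b) * (iv (d \<subseteq> b) * mat_mult M ?F a d))"
    by (rule sum.cong) (auto simp: iv_def)
  also have "\<dots> = iv (a \<subseteq> b) * (\<Sum>d\<in>UNIV. \<Sum>y\<in>UNIV. M a y * (iv (d \<subseteq> b) * ?F y d))"
    by (simp add: sum_distrib_left[symmetric] mat_mult_def sum_distrib_left mult_ac)
  also have "\<dots> = iv (a \<subseteq> b) * (\<Sum>y\<in>UNIV. M a y * gsum M n y b)"
    by (subst sum.swap) (simp add: gsum_def sum_distrib_left)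
  finally show ?thesis .
qed

lemma iv_nonneg: "0 \<le> iv P" and iv_le1: "iv P \<le> 1"
  by (auto simp: iv_def)

lemma gsum_dec: assumes "stoch M" shows "gsum M (Suc n) a b \<le> gsum M n a b"
proof (induction n arbitrary: a)
  case 0
  have "(\<Sum>y\<in>UNIV. M a y * iv (y \<subseteq> b)) \<le> (\<Sum>y\<in>UNIV. M a y)"
    using assms by (intro sum_mono) (auto simp: stoch_def iv_def)
  also have "\<dots> = 1" using assms by (simp add: stoch_def)
  finally show ?case
    by (simp add: gsum_Suc gsum_0) (simp add: iv_def)
next
  case (Suc n)
  have "(\<Sum>y\<in>UNIV. M a y * gsum M (Suc n) y b) \<le> (\<Sum>y\<in>UNIV. M a y * gsum M n y b)"
    using assms Suc by (intro sum_mono mult_left_mono) (auto simp: stoch_def)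
  then show ?case
    by (subst (1 2) gsum_Suc) (intro mult_left_mono iv_nonneg)
qed

lemma gsum_nonneg: "stoch M \<Longrightarrow> 0 \<le> gsum M n a b"
  using stoch_iter[of M n] unfolding gsum_def stoch_def by (auto intro!: sum_nonneg simp: iv_def)

lemma gsum_conv: assumes "stoch M" shows "convergent (\<lambda>n. gsum M n a b)"
proof -
  have "decseq (\<lambda>n. gsum M n a b)"
    using gsum_dec[OF assms] by (intro decseq_SucI) auto
  then obtain L where "(\<lambda>n. gsum M n a b) \<longlonglongrightarrow> L"
    using gsum_nonneg[OF assms] by (metis decseq_convergent)
  then show ?thesis by (auto simp: convergent_def)
qed

lemma iter_conv: assumes "stoch M" shows "convergent (\<lambda>n. mat_iter M n a b)"
proof (induction b rule: measure_induct_rule[where f=card])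
  case (less b)
  have eq: "mat_iter M n a b = gsum M n a b - (\<Sum>c\<in>{c. c \<subset> b}. mat_iter M n a c)" for n
  proof -
    have "gsum M n a b = (\<Sum>c\<in>{c. c \<subseteq> b}. mat_iter M n a c)"
    proof -
      have "gsum M n a b = (\<Sum>c\<in>UNIV. if c \<subseteq> b then mat_iter M n a c else 0)"
        unfolding gsum_def by (rule sum.cong) (auto simp: iv_def)
      then show ?thesis by (simp add: sum.inter_filter[symmetric])
    qed
    also have "{c. c \<subseteq> b} = insert b {c. c \<subset> b}" by auto
    also have "(\<Sum>c\<in>insert b {c. c \<subset> b}. mat_iter M n a c) = mat_iter M n a b + (\<Sum>c\<in>{c. c \<subset> b}. mat_iter M n a c)"
      by (subst sum.insert) auto
    finally show ?thesis by simp
  qed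
  have "convergent (\<lambda>n. \<Sum>c\<in>{c. c \<subset> b}. mat_iter M n a c)"
    by (rule convergent_sum) (auto intro!: less psubset_card_mono)
  then show ?case unfolding eq by (intro convergent_diff gsum_conv assms)
qed

lemma stoch_progB: "wf_prog p \<Longrightarrow> stoch (progB p)"
proof (induction p)
  case (Pred t)
  then show ?case by (simp add: stoch_predB)
next
  case (Assign f n)
  then show ?case by (simp add: stoch_def iv_def)
next
  case (Union p q)
  then show ?case by (simp add: stoch_union)
next
  case (Seq p q)
  then show ?case by (simp add: stoch_mult)
next
  case (Choice p r q)
  then have r: "0 \<le> r" "r \<le> 1" and sp: "stoch (progB p)" and sq: "stoch (progB q)" by auto
  have "0 \<le> r * progB p a b + (1 - r) * progB q a b" for a b
    using r sp sq by (auto simp: stoch_def intro!: add_nonneg_nonneg mult_nonneg_nonneg)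
  moreover have "(\<Sum>b\<in>UNIV. r * progB p a b + (1 - r) * progB q a b) = 1" for a
    using sp sq by (simp add: sum.distrib sum_distrib_left[symmetric] stoch_def)
  ultimately show ?case by (simp add: stoch_def)
next
  case (Star p)
  then have sp: "stoch (progB p)" by simp
  let ?F = "\<lambda>n. mat_iter (progB p) n"
  have lim: "(\<lambda>n. ?F n a b) \<longlonglongrightarrow> lim (\<lambda>n. ?F n a b)" for a b
    using iter_conv[OF sp] by (simp add: convergent_LIMSEQ_iff)
  have "0 \<le> lim (\<lambda>n. ?F n a b)" for a b
    using stoch_iter[OF sp] by (intro LIMSEQ_le_const[OF lim]) (auto simp: stoch_def)
  moreover have "(\<Sum>b\<in>UNIV. lim (\<lambda>n. ?F n a b)) = 1" for a
  proof -
    have "(\<lambda>n. \<Sum>b\<in>UNIV. ?F n a b) \<longlonglongrightarrow> (\<Sum>b\<in>UNIV. lim (\<lambda>n. ?F n a b))"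
      by (intro tendsto_sum lim)
    moreover have "(\<lambda>n. \<Sum>b\<in>UNIV. ?F n a b) = (\<lambda>n. 1)"
      using stoch_iter[OF sp] by (simp add: stoch_def)
    ultimately show ?thesis by (metis LIMSEQ_const_iff)
  qed
  ultimately show ?case by (simp add: stoch_def)
qed

lemma prog_pow_iter: "progB (prog_pow p n) = mat_iter (progB p) n"
proof (induction n)
  case 0
  then show ?case by (simp add: fun_eq_iff mat_id_def)
next
  case (Suc n)
  have "predB PTrue = mat_id" by (simp add: fun_eq_iff mat_id_def)
  then show ?case using Suc by (metis prog_pow.simps(2) progB.simps(1,3,4) mat_iter.simps(2))
qed

lemma sum_UNIV_pair: "sum h (UNIV::('a::finite \<times> 'b::finite) set) = (\<Sum>x\<in>UNIV. \<Sum>y\<in>UNIV. h (x,y))"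
  by (subst UNIV_Times_UNIV[symmetric]) (simp add: sum.cartesian_product)

lemma path_sum:
  assumes "stoch (progB p)"
  shows "(\<Sum>a'\<in>UNIV. mat_pow (smallS p) (Suc n) (a, c) (a', b))
         = (\<Sum>d\<in>UNIV. iv (c \<union> d = b) * mat_iter (progB p) n a d)"
proof (induction n arbitrary: a c)
  case 0
  have "(\<Sum>a'\<in>UNIV. iv (b = c \<union> a) * progB p a a') = iv (b = c \<union> a)"
    using assms by (simp add: sum_distrib_left[symmetric] stoch_def)
  moreover have "(\<Sum>d\<in>UNIV. iv (c \<union> d = b) * mat_id a d) = iv (c \<union> a = b)"
    by (simp add: mat_id_def sum_iv_r')
  moreover have "iv (c \<union> a = b) = iv (b = c \<union> a)" by (auto simp: iv_def)
  ultimately show ?case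
    by (simp add: mat_mult_id_left smallS_def)
next
  case (Suc n)
  let ?P = "progB p" and ?F = "mat_iter (progB p) n"
  have "(\<Sum>a'\<in>UNIV. mat_pow (smallS p) (Suc (Suc n)) (a, c) (a', b))
      = (\<Sum>a'\<in>UNIV. \<Sum>y\<in>UNIV. smallS p (a, c) y * mat_pow (smallS p) (Suc n) y (a', b))"
    by (simp only: mat_pow_Suc'[of _ "Suc n"] mat_mult_def)
  also have "\<dots> = (\<Sum>y\<in>UNIV. \<Sum>a'\<in>UNIV. smallS p (a, c) y * mat_pow (smallS p) (Suc n) y (a', b))"
    by (rule sum.swap)
  also have "\<dots> = (\<Sum>y\<in>UNIV. smallS p (a, c) y * (\<Sum>a'\<in>UNIV. mat_pow (smallS p) (Suc n) y (a', b)))"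
    by (simp only: sum_distrib_left)
  also have "\<dots> = (\<Sum>y1\<in>UNIV. \<Sum>y2\<in>UNIV. (?P a y1 * (\<Sum>d\<in>UNIV. iv (y2 \<union> d = b) * ?F y1 d)) * iv (y2 = c \<union> a))"
    by (simp only: sum_UNIV_pair Suc) (simp add: smallS_def mult_ac)
  also have "\<dots> = (\<Sum>y\<in>UNIV. ?P a y * (\<Sum>e\<in>UNIV. iv (c \<union> a \<union> e = b) * ?F y e))"
    by (simp add: sum_iv_r)
  also have "\<dots> = (\<Sum>y\<in>UNIV. \<Sum>e\<in>UNIV. iv (c \<union> a \<union> e = b) * (?P a y * ?F y e))"
    by (simp add: sum_distrib_left mult_ac)
  also have "\<dots> = (\<Sum>e\<in>UNIV. \<Sum>y\<in>UNIV. iv (c \<union> a \<union> e = b) * (?P a y * ?F y e))"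
    by (rule sum.swap)
  also have "\<dots> = (\<Sum>e\<in>UNIV. iv (c \<union> a \<union> e = b) * mat_mult ?P ?F a e)"
    by (simp add: mat_mult_def sum_distrib_left)
  also have "\<dots> = (\<Sum>e\<in>UNIV. \<Sum>d\<in>UNIV. (iv (c \<union> d = b) * mat_mult ?P ?F a e) * iv (a \<union> e = d))"
    by (simp add: sum_iv_r' Un_assoc)
  also have "\<dots> = (\<Sum>d\<in>UNIV. \<Sum>e\<in>UNIV. (iv (c \<union> d = b) * mat_mult ?P ?F a e) * iv (a \<union> e = d))"
    by (rule sum.swap)
  also have "\<dots> = (\<Sum>d\<in>UNIV. iv (c \<union> d = b) * mat_iter ?P (Suc n) a d)"
    unfolding iter_Suc_expand by (simp add: sum_distrib_left mult_ac)
  finally show ?case .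
qed

theorem proposition4p2:
  fixes p :: "('f::finite, 'v::finite) prog" and n :: nat and a b :: "('f, 'v) packet set"
  assumes "wf_prog p"
  shows "progB (prog_pow p n) a b = (\<Sum>a'\<in>UNIV. mat_pow (smallS p) (Suc n) (a, {}) (a', b))"
  using path_sum[OF stoch_progB[OF assms], of n a "{}" b]
  by (simp add: prog_pow_iter sum_iv_l)

end
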